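(* Let $G$ be a graph. Apply the following operations repeatedly until none is applicable: (1) if $v$ is a vertex of degree at most $2$ and $e$ an edge incident to $v$, contract $v$ along $e$; (2) if $v$ is an isolated vertex, delete $v$. The resulting graph is the (canonical) minor-3-core of $G$.
   Context: Graphs are simple and undirected. Contracting a vertex $u$ along an edge $\{u,v\}$ (i.e. to $v$) produces the graph with vertex set $V\setminus\{u\}$ and edge set consisting of all edges not incident to $u$ together with all edges $\{u',v\}$ with $u'\neq v$ and $\{u',u\}\in E$. A minor of $G$ is a graph obtained from $G$ by vertex contractions and subgraph operations; its vertices are (non-contracted) vertices of $G$. A minor-3-core of $G$ is a minor $H$ of $G$ with minimum degree at least $3$ such that no minor of $G$ with minimum degree at least $3$ has more edges than $H$. A vertex $v$ of a minor-3-core $C$ has the disjoint-paths property if, for its neighbours $u_1,\dots,u_{\Delta_C(v)}$ in $C$, there are paths in $G$ from $v$ to the $u_i$ pairwise sharing only $v$; the canonical minor-3-core is the minor-3-core in which every vertex has this property (it exists and is unique, and every minor-3-core is isomorphic to it). *)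

theory Defs
  imports Main
begin

type_synonym 'a graph = "'a set \<times> 'a set set"

definition verts :: "'a graph \<Rightarrow> 'a set" where "verts G = fst G"
definition edges :: "'a graph \<Rightarrow> 'a set set" where "edges G = snd G"

definition is_graph :: "'a graph \<Rightarrow> bool" where
  "is_graph G \<longleftrightarrow> finite (verts G) \<and>
     (\<forall>e \<in> edges G. \<exists>x y. x \<noteq> y \<and> x \<in> verts G \<and> y \<in> verts G \<and> e = {x, y})"

definition degree :: "'a graph \<Rightarrow> 'a \<Rightarrow> nat" where
  "degree G v = card {e \<in> edges G. v \<in> e}"

definition nbrs :: "'a graph \<Rightarrow> 'a \<Rightarrow> 'a set" where
  "nbrs G v = {u. {u, v} \<in> edges G}"

definition min_deg_ge3 :: "'a graph \<Rightarrow> bool" where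
  "min_deg_ge3 G \<longleftrightarrow> (\<forall>v \<in> verts G. degree G v \<ge> 3)"

definition contract :: "'a \<Rightarrow> 'a \<Rightarrow> 'a graph \<Rightarrow> 'a graph" where
  "contract u v G = (verts G - {u},
     {e \<in> edges G. u \<notin> e} \<union> {{u', v} | u'. u' \<noteq> v \<and> {u', u} \<in> edges G})"

definition subgraph :: "'a graph \<Rightarrow> 'a graph \<Rightarrow> bool" where
  "subgraph H G \<longleftrightarrow> verts H \<subseteq> verts G \<and> edges H \<subseteq> edges G \<and>
     (\<forall>e \<in> edges H. e \<subseteq> verts H)"

inductive minor :: "'a graph \<Rightarrow> 'a graph \<Rightarrow> bool" where
  minor_refl: "minor G G"
| minor_contract: "minor H G \<Longrightarrow> {u, v} \<in> edges H \<Longrightarrow> u \<noteq> v \<Longrightarrow> minor (contract u v H) G"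
| minor_subgraph: "minor H G \<Longrightarrow> subgraph H' H \<Longrightarrow> minor H' G"

definition minor_3_core :: "'a graph \<Rightarrow> 'a graph \<Rightarrow> bool" where
  "minor_3_core G H \<longleftrightarrow> minor H G \<and> min_deg_ge3 H \<and>
     (\<forall>H'. minor H' G \<and> min_deg_ge3 H' \<longrightarrow> card (edges H') \<le> card (edges H))"

definition is_path :: "'a graph \<Rightarrow> 'a list \<Rightarrow> 'a \<Rightarrow> 'a \<Rightarrow> bool" where
  "is_path G p x y \<longleftrightarrow> p \<noteq> [] \<and> hd p = x \<and> last p = y \<and> distinct p \<and>
     set p \<subseteq> verts G \<and> (\<forall>i. Suc i < length p \<longrightarrow> {p ! i, p ! Suc i} \<in> edges G)"

definition disjoint_paths_property :: "'a graph \<Rightarrow> 'a graph \<Rightarrow> 'a \<Rightarrow> bool" where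
  "disjoint_paths_property G C v \<longleftrightarrow>
     (\<exists>P. (\<forall>u \<in> nbrs C v. is_path G (P u) v u) \<and>
          (\<forall>u \<in> nbrs C v. \<forall>u' \<in> nbrs C v. u \<noteq> u' \<longrightarrow> set (P u) \<inter> set (P u') = {v}))"

definition canonical_minor_3_core :: "'a graph \<Rightarrow> 'a graph \<Rightarrow> bool" where
  "canonical_minor_3_core G C \<longleftrightarrow> minor_3_core G C \<and>
     (\<forall>v \<in> verts C. disjoint_paths_property G C v)"

inductive reduce_step :: "'a graph \<Rightarrow> 'a graph \<Rightarrow> bool" where
  contract_step: "v \<in> verts G \<Longrightarrow> degree G v \<le> 2 \<Longrightarrow> {v, w} \<in> edges G \<Longrightarrow> v \<noteq> w \<Longrightarrow>
     reduce_step G (contract v w G)"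
| delete_step: "v \<in> verts G \<Longrightarrow> (\<forall>e \<in> edges G. v \<notin> e) \<Longrightarrow>
     reduce_step G (verts G - {v}, edges G)"

end

theory Submission
  imports Defs
begin


lemma succ_nth: "(\<forall>i. Suc i < length p \<longrightarrow> R (p!i) (p!Suc i)) \<longleftrightarrow> successively R p"
proof (induction R p rule: successively.induct)
  case (3 P x y xs)
  have "(\<forall>i. Suc i < length (x#y#xs) \<longrightarrow> P ((x#y#xs)!i) ((x#y#xs)!Suc i)) \<longleftrightarrow>
        P x y \<and> (\<forall>i. Suc i < length (y#xs) \<longrightarrow> P ((y#xs)!i) ((y#xs)!Suc i))"
    by (metis (no_types, lifting) Suc_less_eq length_Cons nth_Cons_0 nth_Cons_Suc old.nat.exhaust zero_less_Suc)
  then show ?case using 3 by simp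
qed auto

lemma is_path_alt: "is_path G p x y \<longleftrightarrow> p \<noteq> [] \<and> hd p = x \<and> last p = y \<and> distinct p \<and>
     set p \<subseteq> verts G \<and> successively (\<lambda>a b. {a,b} \<in> edges G) p"
  unfolding is_path_def succ_nth[symmetric] by simp

lemma is_path_rev: "is_path G p x y \<Longrightarrow> is_path G (rev p) y x"
  unfolding is_path_alt by (auto simp: hd_rev last_rev insert_commute)

lemma path_join:
  assumes "is_path G p1 a b" "is_path G p2 b c" "set p1 \<inter> set p2 = {b}"
  shows "is_path G (p1 @ tl p2) a c \<and> set (p1 @ tl p2) = set p1 \<union> set p2"
proof -
  obtain t where p2: "p2 = b # t" using assms(2) unfolding is_path_def by (cases p2) auto
  have lp1: "last p1 = b" "p1 \<noteq> []" using assms(1) unfolding is_path_def by auto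
  have dt: "distinct t" "b \<notin> set t" using assms(2) p2 unfolding is_path_def by auto
  have "set p1 \<inter> set t = {}" using assms(3) p2 dt by auto
  moreover have "successively (\<lambda>a b. {a,b} \<in> edges G) (p1 @ t)"
    using assms(1,2) p2 lp1 unfolding is_path_alt by (auto simp: successively_append_iff successively_Cons)
  moreover have "last (p1 @ t) = c" using assms(2) p2 lp1 unfolding is_path_def by (cases "t = []") auto
  ultimately show ?thesis using assms p2 lp1 unfolding is_path_alt by auto
qed



lemma graph_edge: "is_graph K \<Longrightarrow> e \<in> edges K \<Longrightarrow> \<exists>x y. x \<noteq> y \<and> x \<in> verts K \<and> y \<in> verts K \<and> e = {x, y}"
  unfolding is_graph_def by auto

lemma graph_edge2: "is_graph K \<Longrightarrow> {a,b} \<in> edges K \<Longrightarrow> a \<noteq> b \<and> a \<in> verts K \<and> b \<in> verts K"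
proof -
  assume g: "is_graph K" and e: "{a,b} \<in> edges K"
  obtain x y where "x \<noteq> y" "x \<in> verts K" "y \<in> verts K" "{a,b} = {x,y}" using graph_edge[OF g e] by blast
  then show ?thesis by (auto simp: doubleton_eq_iff)
qed

lemma graph_no_loop: "is_graph K \<Longrightarrow> {a,a} \<notin> edges K"
  using graph_edge2 by fastforce

lemma graph_finite_edges: "is_graph K \<Longrightarrow> finite (edges K)"
proof -
  assume g: "is_graph K"
  have "edges K \<subseteq> Pow (verts K)" using g unfolding is_graph_def by auto
  moreover have "finite (verts K)" using g unfolding is_graph_def by auto
  ultimately show ?thesis by (meson finite_Pow_iff finite_subset)
qed

lemma deg3:
  assumes "is_graph K" "degree K v \<le> 2" "{v,a} \<in> edges K" "{v,b} \<in> edges K" "{v,c} \<in> edges K"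
    "a \<noteq> b" "a \<noteq> c" "b \<noteq> c"
  shows False
proof -
  have "a \<noteq> v" using graph_edge2[OF assms(1) assms(3)] by blast
  have "b \<noteq> v" using graph_edge2[OF assms(1) assms(4)] by blast
  have "{v,a} \<noteq> {v,b}" using assms(6) by (simp add: doubleton_eq_iff)
  moreover have "{v,a} \<noteq> {v,c}" using assms(7) by (simp add: doubleton_eq_iff)
  moreover have "{v,b} \<noteq> {v,c}" using assms(8) by (simp add: doubleton_eq_iff)
  ultimately have "card {{v,a},{v,b},{v,c}} = 3" by simp
  moreover have "{{v,a},{v,b},{v,c}} \<subseteq> {e \<in> edges K. v \<in> e}" using assms by auto
  moreover have "finite {e \<in> edges K. v \<in> e}" using graph_finite_edges[OF assms(1)] by auto
  ultimately have "3 \<le> degree K v" unfolding degree_def by (metis card_mono)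
  then show False using assms(2) by simp
qed

lemma edges_contract: "edges (contract u v G) = {e \<in> edges G. u \<notin> e} \<union> {{u', v} | u'. u' \<noteq> v \<and> {u', u} \<in> edges G}"
  unfolding contract_def edges_def by simp
lemma verts_contract: "verts (contract u v G) = verts G - {u}"
  unfolding contract_def verts_def by simp

lemma L_nb:
  assumes "is_graph K" "degree K v \<le> 2" "{v,w} \<in> edges K" "{v,p} \<in> edges K" "{v,q} \<in> edges K" "p \<noteq> q"
  shows "{p,q} \<in> edges (contract v w K)"
proof -
  have "p \<noteq> v" using graph_edge2[OF assms(1) assms(4)] by blast
  have "q \<noteq> v" using graph_edge2[OF assms(1) assms(5)] by blast
  consider "p = w" | "q = w" | "p \<noteq> w" "q \<noteq> w" by blast
  then show ?thesis
  proof cases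
    case 1
    have "{q,v} \<in> edges K" using assms(5) by (metis insert_commute)
    have "{p,q} = {q,w}" using 1 by (metis insert_commute)
    moreover have "q \<noteq> w" using 1 assms(6) by simp
    ultimately show ?thesis using \<open>{q,v} \<in> edges K\<close> unfolding edges_contract by blast
  next
    case 2
    have "{p,v} \<in> edges K" using assms(4) by (metis insert_commute)
    have "{p,q} = {p,w}" using 2 by simp
    moreover have "p \<noteq> w" using 2 assms(6) by simp
    ultimately show ?thesis using \<open>{p,v} \<in> edges K\<close> unfolding edges_contract by blast
  next
    case 3
    then show ?thesis using deg3[OF assms(1,2,3,4,5)] assms(6) by blast
  qed
qed

lemma L_keep: "{p,q} \<in> edges K \<Longrightarrow> p \<noteq> v \<Longrightarrow> q \<noteq> v \<Longrightarrow> {p,q} \<in> edges (contract v w K)"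
  unfolding edges_contract by blast

lemma graph_step: "reduce_step K K' \<Longrightarrow> is_graph K \<Longrightarrow> is_graph K'"
proof (induction rule: reduce_step.induct)
  case (contract_step v G w)
  show ?case unfolding is_graph_def verts_contract edges_contract
  proof (intro conjI ballI)
    show "finite (verts G - {v})" using contract_step unfolding is_graph_def by auto
  next
    fix e assume "e \<in> {e \<in> edges G. v \<notin> e} \<union> {{u', w} |u'. u' \<noteq> w \<and> {u', v} \<in> edges G}"
    then show "\<exists>x y. x \<noteq> y \<and> x \<in> verts G - {v} \<and> y \<in> verts G - {v} \<and> e = {x, y}"
    proof
      assume "e \<in> {e \<in> edges G. v \<notin> e}"
      then show ?thesis using graph_edge[OF contract_step(5)] by blast
    next
      assume "e \<in> {{u', w} |u'. u' \<noteq> w \<and> {u', v} \<in> edges G}"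
      then obtain u' where "e = {u',w}" "u' \<noteq> w" "{u',v} \<in> edges G" by blast
      then show ?thesis using graph_edge2[OF contract_step(5)] contract_step(3,4) by blast
    qed
  qed
next
  case (delete_step v G)
  have v: "verts (verts G - {v}, edges G) = verts G - {v}" "edges (verts G - {v}, edges G) = edges G"
    unfolding verts_def edges_def by auto
  show ?case unfolding is_graph_def v
  proof (intro conjI ballI)
    show "finite (verts G - {v})" using delete_step unfolding is_graph_def by auto
  next
    fix e assume e: "e \<in> edges G"
    obtain x y where "x \<noteq> y" "x \<in> verts G" "y \<in> verts G" "e = {x,y}" using graph_edge[OF delete_step(3) e] by blast
    then show "\<exists>x y. x \<noteq> y \<and> x \<in> verts G - {v} \<and> y \<in> verts G - {v} \<and> e = {x, y}"
      using delete_step(2) e by blast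
  qed
qed



definition adjS :: "'a graph \<Rightarrow> 'a set \<Rightarrow> 'a \<Rightarrow> 'a \<Rightarrow> bool" where
  "adjS K S p q \<longleftrightarrow> p \<in> S \<and> q \<in> S \<and> {p,q} \<in> edges K"
definition conn :: "'a graph \<Rightarrow> 'a set \<Rightarrow> bool" where
  "conn K S \<longleftrightarrow> (\<forall>a\<in>S. \<forall>b\<in>S. (adjS K S)\<^sup>*\<^sup>* a b)"
definition model :: "'a graph \<Rightarrow> 'a graph \<Rightarrow> ('a \<Rightarrow> 'a set) \<Rightarrow> bool" where
  "model M K B \<longleftrightarrow> (\<forall>x\<in>verts M. B x \<noteq> {} \<and> conn K (B x)) \<and>
     (\<forall>x\<in>verts M. \<forall>y\<in>verts M. x \<noteq> y \<longrightarrow> B x \<inter> B y = {}) \<and>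
     (\<forall>e\<in>edges M. \<exists>x y. e = {x,y} \<and> x \<noteq> y \<and> x \<in> verts M \<and> y \<in> verts M \<and>
        (\<exists>a\<in>B x. \<exists>b\<in>B y. {a,b} \<in> edges K))"

lemma reach_mono: "(adjS K S)\<^sup>*\<^sup>* a b \<Longrightarrow> S \<subseteq> T \<Longrightarrow> (adjS K T)\<^sup>*\<^sup>* a b"
proof (induction rule: rtranclp_induct)
  case (step y z)
  then have "adjS K T y z" unfolding adjS_def by auto
  then show ?case using step by (meson rtranclp.rtrancl_into_rtrancl)
qed auto

lemma conn_union:
  assumes "conn K S1" "conn K S2" "a0 \<in> S1" "b0 \<in> S2" "{a0,b0} \<in> edges K"
  shows "conn K (S1 \<union> S2)"
  unfolding conn_def
proof (intro ballI)
  fix a b assume a: "a \<in> S1 \<union> S2" and b: "b \<in> S1 \<union> S2"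
  let ?R = "adjS K (S1 \<union> S2)"
  have r1: "?R\<^sup>*\<^sup>* p q" if "p \<in> S1" "q \<in> S1" for p q
    using assms(1) that reach_mono[of K S1 p q "S1 \<union> S2"] unfolding conn_def by blast
  have r2: "?R\<^sup>*\<^sup>* p q" if "p \<in> S2" "q \<in> S2" for p q
    using assms(2) that reach_mono[of K S2 p q "S1 \<union> S2"] unfolding conn_def by blast
  have e1: "?R a0 b0" using assms unfolding adjS_def by auto
  have e2: "?R b0 a0" using assms unfolding adjS_def by (auto simp: insert_commute)
  show "?R\<^sup>*\<^sup>* a b"
  proof (cases "a \<in> S1")
    case True
    show ?thesis
    proof (cases "b \<in> S1")
      case True
      then show ?thesis using r1 \<open>a \<in> S1\<close> by blast
    next
      case False
      then have "b \<in> S2" using b by blast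
      have "?R\<^sup>*\<^sup>* a a0" using r1 True assms(3) by blast
      moreover have "?R\<^sup>*\<^sup>* b0 b" using r2 \<open>b \<in> S2\<close> assms(4) by blast
      ultimately show ?thesis using e1 by (meson converse_rtranclp_into_rtranclp rtranclp_trans)
    qed
  next
    case False
    then have "a \<in> S2" using a by blast
    show ?thesis
    proof (cases "b \<in> S2")
      case True
      then show ?thesis using r2 \<open>a \<in> S2\<close> by blast
    next
      case False
      then have "b \<in> S1" using b by blast
      have "?R\<^sup>*\<^sup>* a b0" using r2 \<open>a \<in> S2\<close> assms(4) by blast
      moreover have "?R\<^sup>*\<^sup>* a0 b" using r1 \<open>b \<in> S1\<close> assms(3) by blast
      ultimately show ?thesis using e2 by (meson converse_rtranclp_into_rtranclp rtranclp_trans)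
    qed
  qed
qed

lemma nbr_in_conn:
  assumes "is_graph K" "conn K S" "v \<in> S" "q \<in> S" "q \<noteq> v"
  shows "\<exists>p\<in>S. p \<noteq> v \<and> {v,p} \<in> edges K"
proof -
  have "(adjS K S)\<^sup>*\<^sup>* v q" using assms unfolding conn_def by blast
  then show ?thesis
  proof (cases rule: converse_rtranclpE)
    case base
    then show ?thesis using assms by simp
  next
    case (step p)
    then have "p \<in> S" "{v,p} \<in> edges K" unfolding adjS_def by auto
    moreover have "p \<noteq> v" using graph_edge2[OF assms(1) \<open>{v,p} \<in> edges K\<close>] by auto
    ultimately show ?thesis by blast
  qed
qed

lemma conn_contract:
  assumes g: "is_graph K" and d: "degree K v \<le> 2" and vw: "{v,w} \<in> edges K" and c: "conn K S"
  shows "conn (contract v w K) (S - {v})"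
  unfolding conn_def
proof (intro ballI)
  fix a b assume a: "a \<in> S - {v}" and b: "b \<in> S - {v}"
  let ?K' = "contract v w K"
  let ?R = "adjS ?K' (S - {v})"
  have "(adjS K S)\<^sup>*\<^sup>* a b" using c a b unfolding conn_def by blast
  then have "(b \<noteq> v \<longrightarrow> ?R\<^sup>*\<^sup>* a b) \<and> (b = v \<longrightarrow> (\<exists>p. p \<in> S \<and> p \<noteq> v \<and> {v,p} \<in> edges K \<and> ?R\<^sup>*\<^sup>* a p))"
  proof (induction rule: rtranclp_induct)
    case base
    then show ?case using a by auto
  next
    case (step c d)
    have cd: "c \<in> S" "d \<in> S" "{c,d} \<in> edges K" using step(2) unfolding adjS_def by auto
    have cnd: "c \<noteq> d" using graph_edge2[OF g cd(3)] by simp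
    show ?case
    proof (cases "c = v")
      case True
      then obtain p where p: "p \<in> S" "p \<noteq> v" "{v,p} \<in> edges K" "?R\<^sup>*\<^sup>* a p" using step(3) by blast
      have dv: "d \<noteq> v" using cnd True by simp
      have "?R\<^sup>*\<^sup>* a d"
      proof (cases "p = d")
        case True
        then show ?thesis using p by simp
      next
        case False
        have "{v,d} \<in> edges K" using cd True by simp
        then have "{p,d} \<in> edges ?K'" using L_nb[OF g d vw p(3) _ False] by blast
        then have "?R p d" unfolding adjS_def using p cd dv by auto
        then show ?thesis using p(4) by (meson rtranclp.rtrancl_into_rtrancl)
      qed
      then show ?thesis using dv by simp
    next
      case False
      then have IH: "?R\<^sup>*\<^sup>* a c" using step(3) by blast
      show ?thesis
      proof (cases "d = v")
        case True
        have "{v,c} \<in> edges K" using cd True by (simp add: insert_commute)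
        then show ?thesis using True IH cd(1) False by blast
      next
        case dF: False
        have "{c,d} \<in> edges ?K'" using L_keep[OF cd(3) False dF] by simp
        then have "?R c d" unfolding adjS_def using cd False dF by auto
        then show ?thesis using IH dF by (meson rtranclp.rtrancl_into_rtrancl)
      qed
    qed
  qed
  then show "?R\<^sup>*\<^sup>* a b" using b by blast
qed

lemma model_inj:
  assumes "model M K B"
  shows "\<exists>r. inj_on r (edges M) \<and> (\<forall>e\<in>edges M. r e \<in> edges K \<and>
     (\<exists>x y a b. e = {x,y} \<and> x \<in> verts M \<and> y \<in> verts M \<and> x \<noteq> y \<and> a \<in> B x \<and> b \<in> B y \<and> r e = {a,b}))"
proof -
  define P where "P e h \<longleftrightarrow> h \<in> edges K \<and>
     (\<exists>x y a b. e = {x,y} \<and> x \<in> verts M \<and> y \<in> verts M \<and> x \<noteq> y \<and> a \<in> B x \<and> b \<in> B y \<and> h = {a,b})" for e h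
  define r where "r e = (SOME h. P e h)" for e
  have Pr: "P e (r e)" if "e \<in> edges M" for e
  proof -
    have "\<exists>x y. e = {x,y} \<and> x \<noteq> y \<and> x \<in> verts M \<and> y \<in> verts M \<and>
        (\<exists>a\<in>B x. \<exists>b\<in>B y. {a,b} \<in> edges K)" using assms that unfolding model_def by blast
    then obtain x y a b where "e = {x,y}" "x \<noteq> y" "x \<in> verts M" "y \<in> verts M" "a \<in> B x" "b \<in> B y" "{a,b} \<in> edges K"
      by blast
    then have "P e {a,b}" unfolding P_def by blast
    then show ?thesis unfolding r_def by (rule someI)
  qed
  have disj: "B x \<inter> B y = {}" if "x \<in> verts M" "y \<in> verts M" "x \<noteq> y" for x y
    using assms that unfolding model_def by blast
  have "inj_on r (edges M)"
  proof (rule inj_onI)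
    fix e1 e2 assume e1: "e1 \<in> edges M" and e2: "e2 \<in> edges M" and eq: "r e1 = r e2"
    obtain x1 y1 a1 b1 where h1: "e1 = {x1,y1}" "x1 \<in> verts M" "y1 \<in> verts M" "x1 \<noteq> y1" "a1 \<in> B x1" "b1 \<in> B y1" "r e1 = {a1,b1}"
      using Pr[OF e1] unfolding P_def by blast
    obtain x2 y2 a2 b2 where h2: "e2 = {x2,y2}" "x2 \<in> verts M" "y2 \<in> verts M" "x2 \<noteq> y2" "a2 \<in> B x2" "b2 \<in> B y2" "r e2 = {a2,b2}"
      using Pr[OF e2] unfolding P_def by blast
    have "{a1,b1} = {a2,b2}" using h1 h2 eq by simp
    then consider "a1 = a2" "b1 = b2" | "a1 = b2" "b1 = a2" unfolding doubleton_eq_iff by blast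
    then show "e1 = e2"
    proof cases
      case 1
      have "x1 = x2" using disj[OF h1(2) h2(2)] h1(5) h2(5) 1 by blast
      moreover have "y1 = y2" using disj[OF h1(3) h2(3)] h1(6) h2(6) 1 by blast
      ultimately show ?thesis using h1 h2 by simp
    next
      case 2
      have "x1 = y2" using disj[OF h1(2) h2(3)] h1(5) h2(6) 2 by blast
      moreover have "y1 = x2" using disj[OF h1(3) h2(2)] h1(6) h2(5) 2 by blast
      ultimately show ?thesis using h1 h2 by (simp add: insert_commute)
    qed
  qed
  moreover have "\<forall>e\<in>edges M. r e \<in> edges K \<and>
     (\<exists>x y a b. e = {x,y} \<and> x \<in> verts M \<and> y \<in> verts M \<and> x \<noteq> y \<and> a \<in> B x \<and> b \<in> B y \<and> r e = {a,b})"
    using Pr unfolding P_def by simp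
  ultimately show ?thesis by (intro exI[of _ r] conjI)
qed

lemma model_card:
  assumes "is_graph H" "model M H B"
  shows "card (edges M) \<le> card (edges H)"
proof -
  obtain r where r: "inj_on r (edges M)" "\<forall>e\<in>edges M. r e \<in> edges H"
    using model_inj[OF assms(2)] by blast
  have "r ` edges M \<subseteq> edges H" using r(2) by blast
  then show ?thesis using card_inj_on_le[OF r(1) _ graph_finite_edges[OF assms(1)]] by blast
qed

lemma model_deg:
  assumes "is_graph K" "model M K B" "x \<in> verts M" "B x = {v}"
  shows "degree M x \<le> degree K v"
proof -
  obtain r where r: "inj_on r (edges M)" "\<forall>e\<in>edges M. r e \<in> edges K \<and>
     (\<exists>x y a b. e = {x,y} \<and> x \<in> verts M \<and> y \<in> verts M \<and> x \<noteq> y \<and> a \<in> B x \<and> b \<in> B y \<and> r e = {a,b})"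
    using model_inj[OF assms(2)] by blast
  have "r e \<in> {h \<in> edges K. v \<in> h}" if e1: "e \<in> edges M" and e2: "x \<in> e" for e
  proof -
    have "r e \<in> edges K \<and>
     (\<exists>x y a b. e = {x,y} \<and> x \<in> verts M \<and> y \<in> verts M \<and> x \<noteq> y \<and> a \<in> B x \<and> b \<in> B y \<and> r e = {a,b})"
      using r(2) e1 by (rule bspec)
    then obtain x1 y1 a b where h: "e = {x1,y1}" "a \<in> B x1" "b \<in> B y1" "r e = {a,b}" "r e \<in> edges K"
      by blast
    have "x = x1 \<or> x = y1" using h(1) e2 by blast
    then have "v \<in> r e"
    proof
      assume "x = x1" then show ?thesis using h(2,4) assms(4) by simp
    next
      assume "x = y1" then show ?thesis using h(3,4) assms(4) by simp
    qed
    then show ?thesis using h(5) by blast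
  qed
  then have sub: "r ` {e \<in> edges M. x \<in> e} \<subseteq> {h \<in> edges K. v \<in> h}" by blast
  have inj: "inj_on r {e \<in> edges M. x \<in> e}" using r(1) by (rule inj_on_subset) blast
  have fin: "finite {h \<in> edges K. v \<in> h}" using graph_finite_edges[OF assms(1)] by simp
  show ?thesis unfolding degree_def using card_inj_on_le[OF inj sub fin] .
qed



lemma model_nb: "model M K B \<Longrightarrow> x \<in> verts M \<Longrightarrow> B x \<noteq> {} \<and> conn K (B x)"
  unfolding model_def by (rule conjunct1[THEN bspec])
lemma model_dj: "model M K B \<Longrightarrow> x \<in> verts M \<Longrightarrow> y \<in> verts M \<Longrightarrow> x \<noteq> y \<Longrightarrow> B x \<inter> B y = {}"
  unfolding model_def by simp
lemma model_e: "model M K B \<Longrightarrow> e \<in> edges M \<Longrightarrow> \<exists>x y. e = {x,y} \<and> x \<noteq> y \<and> x \<in> verts M \<and> y \<in> verts M \<and>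
        (\<exists>a\<in>B x. \<exists>b\<in>B y. {a,b} \<in> edges K)"
  unfolding model_def by (rule conjunct2[THEN conjunct2, THEN bspec])
lemma modelI:
  assumes "\<And>x. x \<in> verts M \<Longrightarrow> B x \<noteq> {} \<and> conn K (B x)"
    "\<And>x y. x \<in> verts M \<Longrightarrow> y \<in> verts M \<Longrightarrow> x \<noteq> y \<Longrightarrow> B x \<inter> B y = {}"
    "\<And>e. e \<in> edges M \<Longrightarrow> \<exists>x y. e = {x,y} \<and> x \<noteq> y \<and> x \<in> verts M \<and> y \<in> verts M \<and>
        (\<exists>a\<in>B x. \<exists>b\<in>B y. {a,b} \<in> edges K)"
  shows "model M K B"
  unfolding model_def using assms by blast

lemma model_edge:
  assumes "model M K B" "{x,y} \<in> edges M"
  shows "x \<noteq> y \<and> x \<in> verts M \<and> y \<in> verts M \<and> (\<exists>a\<in>B x. \<exists>b\<in>B y. {a,b} \<in> edges K)"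
proof -
  have "\<exists>x' y'. {x,y} = {x',y'} \<and> x' \<noteq> y' \<and> x' \<in> verts M \<and> y' \<in> verts M \<and> (\<exists>a\<in>B x'. \<exists>b\<in>B y'. {a,b} \<in> edges K)"
    using assms(1) assms(2) unfolding model_def by (rule conjunct2[THEN conjunct2, THEN bspec])
  then obtain x' y' where h: "{x,y} = {x',y'}" "x' \<noteq> y'" "x' \<in> verts M" "y' \<in> verts M" "\<exists>a\<in>B x'. \<exists>b\<in>B y'. {a,b} \<in> edges K"
    by blast
  from h(1) have "x = x' \<and> y = y' \<or> x = y' \<and> y = x'" by (simp add: doubleton_eq_iff)
  then show ?thesis
  proof
    assume "x = x' \<and> y = y'" then show ?thesis using h by simp
  next
    assume "x = y' \<and> y = x'" then show ?thesis using h by (metis insert_commute)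
  qed
qed

lemma model_refl: "is_graph G \<Longrightarrow> model G G (\<lambda>x. {x})"
proof (rule modelI)
  fix x show "{x} \<noteq> {} \<and> conn G {x}" unfolding conn_def by simp
next
  fix x y assume "x \<noteq> y" then show "{x} \<inter> {y} = {}" by simp
next
  fix e assume g: "is_graph G" and e: "e \<in> edges G"
  then obtain x y where "x \<noteq> y" "x \<in> verts G" "y \<in> verts G" "e = {x,y}" using graph_edge by blast
  then show "\<exists>x y. e = {x, y} \<and> x \<noteq> y \<and> x \<in> verts G \<and> y \<in> verts G \<and> (\<exists>a\<in>{x}. \<exists>b\<in>{y}. {a, b} \<in> edges G)"
    using e by blast
qed

lemma model_contract:
  assumes m: "model H G B" and uv: "{u,v} \<in> edges H" and "u \<noteq> v"
  shows "model (contract u v H) G (\<lambda>x. if x = v then B u \<union> B v else B x)"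
proof -
  define B' where "B' = (\<lambda>x. if x = v then B u \<union> B v else B x)"
  have me: "u \<noteq> v \<and> u \<in> verts H \<and> v \<in> verts H \<and> (\<exists>a\<in>B u. \<exists>b\<in>B v. {a,b} \<in> edges G)"
    using model_edge[OF m uv] .
  then have uH: "u \<in> verts H" and vH: "v \<in> verts H" by auto
  from me obtain a0 b0 where ab: "a0 \<in> B u" "b0 \<in> B v" "{a0,b0} \<in> edges G" by blast
  have sub: "B x \<subseteq> B' x" if "x \<noteq> u" for x unfolding B'_def using that by auto
  have "model (contract u v H) G B'"
  proof (rule modelI)
    fix x assume x: "x \<in> verts (contract u v H)"
    then have xH: "x \<in> verts H" "x \<noteq> u" unfolding verts_contract by auto
    show "B' x \<noteq> {} \<and> conn G (B' x)"
    proof (cases "x = v")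
      case True
      have "conn G (B u \<union> B v)" using conn_union[of G "B u" "B v" a0 b0] model_nb[OF m uH] model_nb[OF m vH] ab by blast
      then show ?thesis using True ab unfolding B'_def by auto
    next
      case False
      then show ?thesis using model_nb[OF m xH(1)] unfolding B'_def by simp
    qed
  next
    fix x y assume x: "x \<in> verts (contract u v H)" and y: "y \<in> verts (contract u v H)" and xy: "x \<noteq> y"
    then have xH: "x \<in> verts H" "x \<noteq> u" "y \<in> verts H" "y \<noteq> u" unfolding verts_contract by auto
    show "B' x \<inter> B' y = {}"
    proof (cases "x = v")
      case True
      then have "y \<noteq> v" using xy by simp
      then show ?thesis using True model_dj[OF m uH xH(3)] model_dj[OF m vH xH(3)] xH unfolding B'_def by auto
    next
      case False
      show ?thesis
      proof (cases "y = v")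
        case True
        then show ?thesis using False model_dj[OF m xH(1) uH] model_dj[OF m xH(1) vH] xH unfolding B'_def by auto
      next
        case yF: False
        then show ?thesis using False model_dj[OF m xH(1) xH(3) xy] unfolding B'_def by simp
      qed
    qed
  next
    fix e assume "e \<in> edges (contract u v H)"
    then consider "e \<in> edges H" "u \<notin> e" | u' where "e = {u',v}" "u' \<noteq> v" "{u',u} \<in> edges H"
      unfolding edges_contract by blast
    then show "\<exists>x y. e = {x,y} \<and> x \<noteq> y \<and> x \<in> verts (contract u v H) \<and> y \<in> verts (contract u v H) \<and>
        (\<exists>a\<in>B' x. \<exists>b\<in>B' y. {a,b} \<in> edges G)"
    proof cases
      case 1
      obtain x y where h: "e = {x,y}" "x \<noteq> y" "x \<in> verts H" "y \<in> verts H" "\<exists>a\<in>B x. \<exists>b\<in>B y. {a,b} \<in> edges G"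
        using model_e[OF m 1(1)] by blast
      have "x \<noteq> u" "y \<noteq> u" using 1(2) h(1) by auto
      then have "x \<in> verts (contract u v H)" "y \<in> verts (contract u v H)" "B x \<subseteq> B' x" "B y \<subseteq> B' y"
        using h sub unfolding verts_contract by auto
      then show ?thesis using h by blast
    next
      case 2
      have h: "u' \<noteq> u \<and> u' \<in> verts H \<and> u \<in> verts H \<and> (\<exists>a\<in>B u'. \<exists>b\<in>B u. {a,b} \<in> edges G)"
        using model_edge[OF m 2(3)] .
      have "u' \<in> verts (contract u v H)" "v \<in> verts (contract u v H)" "B u' \<subseteq> B' u'" "B u \<subseteq> B' v"
        using h vH 2(2) sub assms(3) unfolding verts_contract B'_def by auto
      then show ?thesis using h 2(1,2) by blast
    qed
  qed
  then show ?thesis unfolding B'_def .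
qed

lemma model_subgraph:
  assumes m: "model H G B" and s: "subgraph H' H"
  shows "model H' G B"
proof -
  have s': "verts H' \<subseteq> verts H" "edges H' \<subseteq> edges H" "\<forall>e\<in>edges H'. e \<subseteq> verts H'" using s unfolding subgraph_def by auto
  show ?thesis
  proof (rule modelI)
    fix x assume "x \<in> verts H'" then show "B x \<noteq> {} \<and> conn G (B x)" using model_nb[OF m] s'(1) by blast
  next
    fix x y assume "x \<in> verts H'" "y \<in> verts H'" "x \<noteq> y" then show "B x \<inter> B y = {}" using model_dj[OF m] s'(1) by blast
  next
    fix e assume e: "e \<in> edges H'"
    obtain x y where h: "e = {x,y}" "x \<noteq> y" "\<exists>a\<in>B x. \<exists>b\<in>B y. {a,b} \<in> edges G"
      using model_e[OF m, of e] e s'(2) by blast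
    have "x \<in> verts H'" "y \<in> verts H'" using s'(3) e h(1) by auto
    then show "\<exists>x y. e = {x,y} \<and> x \<noteq> y \<and> x \<in> verts H' \<and> y \<in> verts H' \<and>
        (\<exists>a\<in>B x. \<exists>b\<in>B y. {a,b} \<in> edges G)" using h by blast
  qed
qed

lemma minor_model: "minor H G \<Longrightarrow> is_graph G \<Longrightarrow> \<exists>B. model H G B"
proof (induction rule: minor.induct)
  case (minor_refl G)
  then show ?case using model_refl by blast
next
  case (minor_contract H G u v)
  then obtain B where B: "model H G B" by blast
  have "model (contract u v H) G (\<lambda>x. if x = v then B u \<union> B v else B x)"
    by (rule model_contract[OF B minor_contract(2,3)])
  then show ?case by blast
next
  case (minor_subgraph H G H')
  then obtain B where B: "model H G B" by blast
  have "model H' G B" by (rule model_subgraph[OF B minor_subgraph(2)])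
  then show ?case by blast
qed



lemma model_edges_eq: "edges K' = edges K \<Longrightarrow> model M K B \<Longrightarrow> model M K' B"
  unfolding model_def conn_def adjS_def by simp

lemma verts_del: "verts (verts G - {v}, edges G) = verts G - {v}" and edges_del: "edges (verts G - {v}, edges G) = edges G"
  unfolding verts_def edges_def by auto

lemma model_contract_step:
  assumes g: "is_graph K" and d: "degree K v \<le> 2" and vw: "{v,w} \<in> edges K"
    and m: "model M K B" and md: "min_deg_ge3 M"
  shows "model M (contract v w K) (\<lambda>x. B x - {v})"
proof (rule modelI)
  fix x assume x: "x \<in> verts M"
  have "B x - {v} \<noteq> {}"
  proof
    assume "B x - {v} = {}"
    then have "B x = {v}" using model_nb[OF m x] by blast
    then have "degree M x \<le> degree K v" using model_deg[OF g m x] by blast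
    moreover have "degree M x \<ge> 3" using md x unfolding min_deg_ge3_def by blast
    ultimately show False using d by simp
  qed
  then show "B x - {v} \<noteq> {} \<and> conn (contract v w K) (B x - {v})"
    using conn_contract[OF g d vw] model_nb[OF m x] by blast
next
  fix x y assume "x \<in> verts M" "y \<in> verts M" "x \<noteq> y"
  then show "(B x - {v}) \<inter> (B y - {v}) = {}" using model_dj[OF m] by blast
next
  fix e assume e: "e \<in> edges M"
  obtain x y a b where h: "e = {x,y}" "x \<noteq> y" "x \<in> verts M" "y \<in> verts M" "a \<in> B x" "b \<in> B y" "{a,b} \<in> edges K"
    using model_e[OF m e] by blast
  have ab: "a \<noteq> b" using graph_edge2[OF g h(7)] by blast
  have dxy: "B x \<inter> B y = {}" using model_dj[OF m h(3,4,2)] .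
  have ne: "B z - {v} \<noteq> {}" if "z \<in> verts M" for z
  proof
    assume "B z - {v} = {}"
    then have "B z = {v}" using model_nb[OF m that] by blast
    then have "degree M z \<le> degree K v" using model_deg[OF g m that] by blast
    moreover have "degree M z \<ge> 3" using md that unfolding min_deg_ge3_def by blast
    ultimately show False using d by simp
  qed
  have "\<exists>a'\<in>B x - {v}. \<exists>b'\<in>B y - {v}. {a',b'} \<in> edges (contract v w K)"
  proof (cases "a = v")
    case True
    then have bv: "b \<noteq> v" using ab by simp
    obtain q where q: "q \<in> B x" "q \<noteq> v" using ne[OF h(3)] by blast
    obtain p where p: "p \<in> B x" "p \<noteq> v" "{v,p} \<in> edges K"
      using nbr_in_conn[OF g _ _ q] model_nb[OF m h(3)] h(5) True by blast
    have pb: "p \<noteq> b" using p(1) h(6) dxy by blast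
    have "{v,b} \<in> edges K" using h(7) True by simp
    then have "{p,b} \<in> edges (contract v w K)" using L_nb[OF g d vw p(3) _ pb] by blast
    then show ?thesis using p h(6) bv by blast
  next
    case aF: False
    show ?thesis
    proof (cases "b = v")
      case True
      obtain q where q: "q \<in> B y" "q \<noteq> v" using ne[OF h(4)] by blast
      obtain p where p: "p \<in> B y" "p \<noteq> v" "{v,p} \<in> edges K"
        using nbr_in_conn[OF g _ _ q] model_nb[OF m h(4)] h(6) True by blast
      have pa: "a \<noteq> p" using p(1) h(5) dxy by blast
      have "{v,a} \<in> edges K" using h(7) True by (simp add: insert_commute)
      then have "{a,p} \<in> edges (contract v w K)" using L_nb[OF g d vw _ p(3) pa] by blast
      then show ?thesis using p h(5) aF by blast
    next
      case False
      then have "{a,b} \<in> edges (contract v w K)" using L_keep[OF h(7) aF False] by blast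
      then show ?thesis using h(5,6) aF False by blast
    qed
  qed
  then show "\<exists>x y. e = {x,y} \<and> x \<noteq> y \<and> x \<in> verts M \<and> y \<in> verts M \<and>
        (\<exists>a\<in>B x - {v}. \<exists>b\<in>B y - {v}. {a,b} \<in> edges (contract v w K))"
    using h(1-4) by blast
qed

lemma step_model:
  assumes "reduce_step K K'" "is_graph K" "model M K B" "min_deg_ge3 M"
  shows "\<exists>B'. model M K' B'"
  using assms
proof (induction rule: reduce_step.induct)
  case (contract_step v G w)
  have "model M (contract v w G) (\<lambda>x. B x - {v})"
    by (rule model_contract_step[OF contract_step(5,2,3,6,7)])
  then show ?case by blast
next
  case (delete_step v G)
  have "model M (verts G - {v}, edges G) B"
    by (rule model_edges_eq[OF edges_del delete_step(4)])
  then show ?case by blast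
qed

lemma reduce_model:
  assumes "reduce_step\<^sup>*\<^sup>* G H" "is_graph G" "model M G B" "min_deg_ge3 M"
  shows "is_graph H \<and> (\<exists>B'. model M H B')"
  using assms(1)
proof (induction rule: rtranclp_induct)
  case base
  then show ?case using assms by blast
next
  case (step K K')
  then obtain B1 where "is_graph K" "model M K B1" by blast
  then show ?case using step_model[OF step(2) _ _ assms(4)] graph_step[OF step(2)] by blast
qed

lemma maximal:
  assumes "reduce_step\<^sup>*\<^sup>* G H" "is_graph G" "minor M G" "min_deg_ge3 M"
  shows "card (edges M) \<le> card (edges H)"
proof -
  obtain B where "model M G B" using minor_model[OF assms(3,2)] by blast
  then have "is_graph H \<and> (\<exists>B'. model M H B')" using reduce_model[OF assms(1,2) _ assms(4)] by blast
  then show ?thesis using model_card by blast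
qed



definition psys :: "'a graph \<Rightarrow> 'a graph \<Rightarrow> ('a set \<Rightarrow> 'a list) \<Rightarrow> bool" where
  "psys G K P \<longleftrightarrow> (\<forall>e\<in>edges K. (\<exists>x y. e = {x,y} \<and> is_path G (P e) x y) \<and> (set (P e) - e) \<inter> verts K = {}) \<and>
     (\<forall>e\<in>edges K. \<forall>e'\<in>edges K. e \<noteq> e' \<longrightarrow> (set (P e) - e) \<inter> (set (P e') - e') = {})"

lemma psys_path: "psys G K P \<Longrightarrow> e \<in> edges K \<Longrightarrow> \<exists>x y. e = {x,y} \<and> is_path G (P e) x y"
  unfolding psys_def by blast
lemma psys_int: "psys G K P \<Longrightarrow> e \<in> edges K \<Longrightarrow> (set (P e) - e) \<inter> verts K = {}"
  unfolding psys_def by blast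
lemma psys_dj: "psys G K P \<Longrightarrow> e \<in> edges K \<Longrightarrow> e' \<in> edges K \<Longrightarrow> e \<noteq> e' \<Longrightarrow> (set (P e) - e) \<inter> (set (P e') - e') = {}"
  unfolding psys_def by blast
lemma psysI:
  assumes "\<And>e. e \<in> edges K \<Longrightarrow> \<exists>x y. e = {x,y} \<and> is_path G (P e) x y"
    "\<And>e. e \<in> edges K \<Longrightarrow> (set (P e) - e) \<inter> verts K = {}"
    "\<And>e e'. e \<in> edges K \<Longrightarrow> e' \<in> edges K \<Longrightarrow> e \<noteq> e' \<Longrightarrow> (set (P e) - e) \<inter> (set (P e') - e') = {}"
  shows "psys G K P"
  unfolding psys_def using assms by blast

lemma orient:
  assumes "\<exists>x y. {a,b} = {x,y} \<and> is_path G p x y"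
  shows "\<exists>q. is_path G q a b \<and> set q = set p"
proof -
  obtain x y where h: "{a,b} = {x,y}" "is_path G p x y" using assms by blast
  from h(1) have "a = x \<and> b = y \<or> a = y \<and> b = x" by (simp add: doubleton_eq_iff)
  then show ?thesis
  proof
    assume "a = x \<and> b = y" then show ?thesis using h(2) by blast
  next
    assume "a = y \<and> b = x" then show ?thesis using is_path_rev[OF h(2)] by (intro exI[of _ "rev p"]) simp
  qed
qed

lemma psys_base:
  assumes g: "is_graph G"
  shows "\<exists>P. psys G G P"
proof -
  define P where "P e = (SOME l. \<exists>x y. e = {x,y} \<and> x \<noteq> y \<and> x \<in> verts G \<and> y \<in> verts G \<and> l = [x,y])" for e
  have Pe: "\<exists>x y. e = {x,y} \<and> x \<noteq> y \<and> x \<in> verts G \<and> y \<in> verts G \<and> P e = [x,y]" if "e \<in> edges G" for e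
  proof -
    have "\<exists>l x y. e = {x,y} \<and> x \<noteq> y \<and> x \<in> verts G \<and> y \<in> verts G \<and> l = [x,y]"
      using graph_edge[OF g that] by blast
    then have "\<exists>x y. e = {x,y} \<and> x \<noteq> y \<and> x \<in> verts G \<and> y \<in> verts G \<and> (SOME l. \<exists>x y. e = {x,y} \<and> x \<noteq> y \<and> x \<in> verts G \<and> y \<in> verts G \<and> l = [x,y]) = [x,y]"
      by (rule someI_ex)
    then show ?thesis unfolding P_def .
  qed
  have "psys G G P"
  proof (rule psysI)
    fix e assume e: "e \<in> edges G"
    obtain x y where h: "e = {x,y}" "x \<noteq> y" "x \<in> verts G" "y \<in> verts G" "P e = [x,y]" using Pe[OF e] by (elim exE conjE) simp
    have exy: "{x,y} \<in> edges G" using e h(1) by simp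
    have "is_path G [x,y] x y" unfolding is_path_alt using h(2,3,4) exy by simp
    then have "is_path G (P e) x y" using h(5) by simp
    then show "\<exists>x y. e = {x,y} \<and> is_path G (P e) x y" using h(1) by blast
  next
    fix e assume e: "e \<in> edges G"
    obtain x y where h: "e = {x,y}" "P e = [x,y]" using Pe[OF e] by (elim exE conjE) simp
    have "set (P e) - e = {}" using h by simp
    then show "(set (P e) - e) \<inter> verts G = {}" by blast
  next
    fix e e' assume e: "e \<in> edges G" and "e' \<in> edges G" "e \<noteq> e'"
    obtain x y where h: "e = {x,y}" "P e = [x,y]" using Pe[OF e] by (elim exE conjE) simp
    have "set (P e) - e = {}" using h by simp
    then show "(set (P e) - e) \<inter> (set (P e') - e') = {}" by blast
  qed
  then show ?thesis by blast
qed



lemma newpath: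
  assumes g: "is_graph K" and ps: "psys G K P" and vw: "{v,w} \<in> edges K"
    and u: "u \<noteq> w" "{u,v} \<in> edges K"
  shows "\<exists>q. is_path G q u w \<and> set q - {u,w} \<subseteq> (set (P {u,v}) - {u,v}) \<union> {v} \<union> (set (P {v,w}) - {v,w})"
proof -
  obtain p1 where p1: "is_path G p1 u v" "set p1 = set (P {u,v})" using orient[OF psys_path[OF ps u(2)]] by blast
  obtain p2 where p2: "is_path G p2 v w" "set p2 = set (P {v,w})" using orient[OF psys_path[OF ps vw]] by blast
  have uv: "u \<noteq> v" "u \<in> verts K" "v \<in> verts K" using graph_edge2[OF g u(2)] by auto
  have wv: "w \<noteq> v" "w \<in> verts K" using graph_edge2[OF g vw] by auto
  have I1: "(set p1 - {u,v}) \<inter> verts K = {}" using psys_int[OF ps u(2)] p1(2) by simp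
  have I2: "(set p2 - {v,w}) \<inter> verts K = {}" using psys_int[OF ps vw] p2(2) by simp
  have ne: "{u,v} \<noteq> {v,w}" using u(1) uv(1) by (auto simp: doubleton_eq_iff)
  have I12: "(set p1 - {u,v}) \<inter> (set p2 - {v,w}) = {}" using psys_dj[OF ps u(2) vw ne] p1(2) p2(2) by simp
  have v1: "v \<in> set p1" using p1(1) unfolding is_path_def by (metis last_in_set)
  have v2: "v \<in> set p2" using p2(1) unfolding is_path_def by (metis hd_in_set)
  have "set p1 \<inter> set p2 = {v}"
  proof
    show "{v} \<subseteq> set p1 \<inter> set p2" using v1 v2 by simp
  next
    show "set p1 \<inter> set p2 \<subseteq> {v}"
    proof
      fix z assume z: "z \<in> set p1 \<inter> set p2"
      show "z \<in> {v}"
      proof (rule ccontr)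
        assume zv: "z \<notin> {v}"
        show False
        proof (cases "z = u")
          case True
          then have "z \<in> set p2 - {v,w}" using z zv u(1) by auto
          then show False using I2 uv(2) True by blast
        next
          case False
          then have z1: "z \<in> set p1 - {u,v}" using z zv by auto
          show False
          proof (cases "z = w")
            case True
            then show False using I1 z1 wv(2) by blast
          next
            case False
            then have "z \<in> set p2 - {v,w}" using z zv by auto
            then show False using I12 z1 by blast
          qed
        qed
      qed
    qed
  qed
  then have j: "is_path G (p1 @ tl p2) u w \<and> set (p1 @ tl p2) = set p1 \<union> set p2"
    using path_join[OF p1(1) p2(1)] by blast
  have "set (p1 @ tl p2) - {u,w} \<subseteq> (set (P {u,v}) - {u,v}) \<union> {v} \<union> (set (P {v,w}) - {v,w})"
    using j p1(2) p2(2) by auto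
  then show ?thesis using j by blast
qed

lemma psys_contract:
  assumes g: "is_graph K" and d: "degree K v \<le> 2" and vw: "{v,w} \<in> edges K" and ps: "psys G K P"
  shows "\<exists>P'. psys G (contract v w K) P'"
proof -
  define I where "I e = set (P e) - e" for e
  define Q where "Q e q \<longleftrightarrow> (\<exists>u. e = {u,w} \<and> u \<noteq> w \<and> {u,v} \<in> edges K \<and> is_path G q u w \<and>
      set q - {u,w} \<subseteq> I {u,v} \<union> {v} \<union> I {v,w})" for e q
  define P' where "P' e = (if e \<in> edges K then P e else (SOME q. Q e q))" for e
  have wv: "w \<noteq> v" "w \<in> verts K" "v \<in> verts K" using graph_edge2[OF g vw] by auto
  have old: "v \<notin> e" if "e \<in> edges (contract v w K)" "e \<in> edges K" for e
  proof -
    from that(1) consider "e \<in> edges K" "v \<notin> e" | u where "e = {u,w}" "u \<noteq> w" "{u,v} \<in> edges K"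
      unfolding edges_contract by blast
    then show ?thesis
    proof cases
      case 1 then show ?thesis by simp
    next
      case 2
      have "u \<noteq> v" using graph_edge2[OF g 2(3)] by simp
      then show ?thesis using 2(1) wv(1) by simp
    qed
  qed
  have new: "Q e (P' e)" if "e \<in> edges (contract v w K)" "e \<notin> edges K" for e
  proof -
    from that consider u where "e = {u,w}" "u \<noteq> w" "{u,v} \<in> edges K"
      unfolding edges_contract by blast
    then obtain u where u: "e = {u,w}" "u \<noteq> w" "{u,v} \<in> edges K" by blast
    obtain q where q: "is_path G q u w" "set q - {u,w} \<subseteq> (set (P {u,v}) - {u,v}) \<union> {v} \<union> (set (P {v,w}) - {v,w})"
      using newpath[OF g ps vw u(2,3)] by blast
    have "Q e q" unfolding Q_def I_def using u q by blast
    then have "Q e (SOME q. Q e q)" by (rule someI)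
    then show ?thesis unfolding P'_def using that(2) by simp
  qed
  have newint: "set (P' e) - e \<subseteq> I {u,v} \<union> {v} \<union> I {v,w} \<and> u \<noteq> w \<and> {u,v} \<in> edges K \<and> e = {u,w}"
    if asm: "Q e (P' e)" "e = {u,w}" "u \<noteq> w" for e u
  proof -
    obtain u' where u': "e = {u',w}" "u' \<noteq> w" "{u',v} \<in> edges K"
      "set (P' e) - {u',w} \<subseteq> I {u',v} \<union> {v} \<union> I {v,w}" using asm(1) unfolding Q_def by blast
    have "u' = u" using u'(1,2) asm(2,3) by (auto simp: doubleton_eq_iff)
    then show ?thesis using u' by simp
  qed
  have mixed: "(set (P' e1) - e1) \<inter> (set (P' e2) - e2) = {}"
    if e1: "e1 \<in> edges (contract v w K)" "e1 \<notin> edges K" and e2: "e2 \<in> edges (contract v w K)" "e2 \<in> edges K" for e1 e2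
  proof -
    have Q1: "Q e1 (P' e1)" using new[OF e1] .
    then obtain u where u: "e1 = {u,w}" "u \<noteq> w" unfolding Q_def by blast
    have h: "set (P' e1) - e1 \<subseteq> I {u,v} \<union> {v} \<union> I {v,w}" "{u,v} \<in> edges K" using newint[OF Q1 u] by auto
    have v2: "v \<notin> e2" using old[OF e2] .
    have P2: "P' e2 = P e2" unfolding P'_def using e2(2) by simp
    have n1: "e2 \<noteq> {u,v}" using v2 by auto
    have n2: "e2 \<noteq> {v,w}" using v2 by auto
    have d1: "I e2 \<inter> I {u,v} = {}" using psys_dj[OF ps e2(2) h(2) n1] unfolding I_def .
    have d2: "I e2 \<inter> I {v,w} = {}" using psys_dj[OF ps e2(2) vw n2] unfolding I_def .
    have d3: "v \<notin> I e2" using psys_int[OF ps e2(2)] wv(3) unfolding I_def by blast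
    have "set (P' e2) - e2 = I e2" using P2 unfolding I_def by simp
    then show ?thesis using h(1) d1 d2 d3 by blast
  qed
  have "psys G (contract v w K) P'"
  proof (rule psysI)
    fix e assume e: "e \<in> edges (contract v w K)"
    show "\<exists>x y. e = {x,y} \<and> is_path G (P' e) x y"
    proof (cases "e \<in> edges K")
      case True
      then show ?thesis using psys_path[OF ps True] unfolding P'_def by simp
    next
      case False
      then have "Q e (P' e)" using new[OF e] by blast
      then show ?thesis unfolding Q_def by blast
    qed
  next
    fix e assume e: "e \<in> edges (contract v w K)"
    show "(set (P' e) - e) \<inter> verts (contract v w K) = {}"
    proof (cases "e \<in> edges K")
      case True
      then show ?thesis using psys_int[OF ps True] unfolding P'_def verts_contract by auto
    next
      case False
      then have Q1: "Q e (P' e)" using new[OF e] by blast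
      then obtain u where u: "e = {u,w}" "u \<noteq> w" unfolding Q_def by blast
      have h: "set (P' e) - e \<subseteq> I {u,v} \<union> {v} \<union> I {v,w}" "{u,v} \<in> edges K" using newint[OF Q1 u] by auto
      have "I {u,v} \<inter> verts K = {}" "I {v,w} \<inter> verts K = {}" using psys_int[OF ps h(2)] psys_int[OF ps vw] unfolding I_def by auto
      then show ?thesis using h(1) unfolding verts_contract by blast
    qed
  next
    fix e1 e2 assume e1: "e1 \<in> edges (contract v w K)" and e2: "e2 \<in> edges (contract v w K)" and ne: "e1 \<noteq> e2"
    show "(set (P' e1) - e1) \<inter> (set (P' e2) - e2) = {}"
    proof (cases "e1 \<in> edges K")
      case T1: True
      show ?thesis
      proof (cases "e2 \<in> edges K")
        case True
        then show ?thesis using psys_dj[OF ps T1 True ne] unfolding P'_def using T1 by simp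
      next
        case False
        then show ?thesis using mixed[OF e2 False e1 T1] by blast
      qed
    next
      case F1: False
      show ?thesis
      proof (cases "e2 \<in> edges K")
        case True
        then show ?thesis using mixed[OF e1 F1 e2 True] by blast
      next
        case False
        have Q1: "Q e1 (P' e1)" using new[OF e1 F1] .
        then obtain u1 where u1: "e1 = {u1,w}" "u1 \<noteq> w" "{u1,v} \<in> edges K" unfolding Q_def by blast
        have Q2: "Q e2 (P' e2)" using new[OF e2 False] .
        then obtain u2 where u2: "e2 = {u2,w}" "u2 \<noteq> w" "{u2,v} \<in> edges K" unfolding Q_def by blast
        have "u1 \<noteq> u2" using ne u1(1) u2(1) by blast
        moreover have "{v,u1} \<in> edges K" "{v,u2} \<in> edges K" using u1(3) u2(3) by (simp_all add: insert_commute)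
        ultimately have False using deg3[OF g d vw] u1(2) u2(2) by metis
        then show ?thesis by simp
      qed
    qed
  qed
  then show ?thesis by blast
qed

lemma psys_step:
  assumes "reduce_step K K'" "is_graph K" "psys G K P"
  shows "\<exists>P'. psys G K' P'"
  using assms
proof (induction rule: reduce_step.induct)
  case (contract_step v K w)
  then show ?case using psys_contract[OF contract_step(5,2,3,6)] by blast
next
  case (delete_step v K)
  have "psys G (verts K - {v}, edges K) P"
  proof (rule psysI)
    fix e assume "e \<in> edges (verts K - {v}, edges K)"
    then have e: "e \<in> edges K" by (simp add: edges_def)
    show "\<exists>x y. e = {x,y} \<and> is_path G (P e) x y" using psys_path[OF delete_step(4) e] .
    show "(set (P e) - e) \<inter> verts (verts K - {v}, edges K) = {}" using psys_int[OF delete_step(4) e] by (auto simp: verts_def)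
  next
    fix e e' assume "e \<in> edges (verts K - {v}, edges K)" "e' \<in> edges (verts K - {v}, edges K)" "e \<noteq> e'"
    then show "(set (P e) - e) \<inter> (set (P e') - e') = {}" using psys_dj[OF delete_step(4)] by (simp add: edges_def)
  qed
  then show ?case by blast
qed



lemma psys_dpp:
  assumes g: "is_graph H" and ps: "psys G H P" and vH: "v \<in> verts H"
  shows "disjoint_paths_property G H v"
proof -
  define Pv where "Pv u = (SOME q. is_path G q v u \<and> set q = set (P {u,v}))" for u
  have pv: "is_path G (Pv u) v u \<and> set (Pv u) = set (P {u,v})" if "u \<in> nbrs H v" for u
  proof -
    have e: "{u,v} \<in> edges H" using that unfolding nbrs_def by simp
    obtain x y where xy: "{u,v} = {x,y}" "is_path G (P {u,v}) x y" using psys_path[OF ps e] by blast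
    have "{v,u} = {x,y}" using xy(1) by (simp add: insert_commute)
    then have "\<exists>x y. {v,u} = {x,y} \<and> is_path G (P {u,v}) x y" using xy(2) by blast
    then have "\<exists>q. is_path G q v u \<and> set q = set (P {u,v})" by (rule orient)
    then show ?thesis unfolding Pv_def by (rule someI_ex)
  qed
  have "set (Pv u) \<inter> set (Pv u') = {v}" if u: "u \<in> nbrs H v" and u': "u' \<in> nbrs H v" and uu: "u \<noteq> u'" for u u'
  proof
    have "v \<in> set (Pv u)" using pv[OF u] unfolding is_path_def by (metis hd_in_set)
    moreover have "v \<in> set (Pv u')" using pv[OF u'] unfolding is_path_def by (metis hd_in_set)
    ultimately show "{v} \<subseteq> set (Pv u) \<inter> set (Pv u')" by simp
  next
    have e1: "{u,v} \<in> edges H" using u unfolding nbrs_def by simp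
    have e2: "{u',v} \<in> edges H" using u' unfolding nbrs_def by simp
    have h1: "u \<noteq> v" "u \<in> verts H" using graph_edge2[OF g e1] by auto
    have h2: "u' \<noteq> v" "u' \<in> verts H" using graph_edge2[OF g e2] by auto
    have ne: "{u,v} \<noteq> {u',v}" using uu h1(1) by (auto simp: doubleton_eq_iff)
    have i1: "(set (P {u,v}) - {u,v}) \<inter> verts H = {}" using psys_int[OF ps e1] .
    have i2: "(set (P {u',v}) - {u',v}) \<inter> verts H = {}" using psys_int[OF ps e2] .
    have dj: "(set (P {u,v}) - {u,v}) \<inter> (set (P {u',v}) - {u',v}) = {}" using psys_dj[OF ps e1 e2 ne] .
    show "set (Pv u) \<inter> set (Pv u') \<subseteq> {v}"
    proof
      fix z assume z: "z \<in> set (Pv u) \<inter> set (Pv u')"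
      then have z1: "z \<in> set (P {u,v})" and z2: "z \<in> set (P {u',v})" using pv[OF u] pv[OF u'] by auto
      show "z \<in> {v}"
      proof (rule ccontr)
        assume zv: "z \<notin> {v}"
        show False
        proof (cases "z = u")
          case True
          then have "z \<in> set (P {u',v}) - {u',v}" using z2 uu zv by auto
          then show False using i2 h1(2) True by blast
        next
          case False
          then have z1': "z \<in> set (P {u,v}) - {u,v}" using z1 zv by auto
          show False
          proof (cases "z = u'")
            case True
            then show False using i1 z1' h2(2) by blast
          next
            case False
            then have "z \<in> set (P {u',v}) - {u',v}" using z2 zv by auto
            then show False using dj z1' by blast
          qed
        qed
      qed
    qed
  qed
  then show ?thesis unfolding disjoint_paths_property_def using pv by blast
qed

lemma minor_step: "reduce_step K K' \<Longrightarrow> is_graph K \<Longrightarrow> minor K G \<Longrightarrow> minor K' G"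
proof (induction rule: reduce_step.induct)
  case (contract_step v K w)
  then show ?case using minor_contract[OF contract_step(6) contract_step(3,4)] by blast
next
  case (delete_step v K)
  have "subgraph (verts K - {v}, edges K) K"
    unfolding subgraph_def verts_del edges_del
  proof (intro conjI ballI)
    fix e assume e: "e \<in> edges K"
    obtain x y where "x \<in> verts K" "y \<in> verts K" "e = {x,y}" using graph_edge[OF delete_step(3) e] by blast
    then show "e \<subseteq> verts K - {v}" using delete_step(2) e by blast
  qed auto
  then show ?case using minor_subgraph[OF delete_step(4)] by blast
qed

lemma reduce_all:
  assumes "reduce_step\<^sup>*\<^sup>* G H" "is_graph G"
  shows "is_graph H \<and> minor H G \<and> (\<exists>P. psys G H P)"
  using assms(1)
proof (induction rule: rtranclp_induct)
  case base
  then show ?case using assms(2) psys_base[OF assms(2)] minor_refl by blast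
next
  case (step K K')
  then have g: "is_graph K" and m: "minor K G" and p: "\<exists>P. psys G K P" by auto
  from p obtain P where "psys G K P" by blast
  then show ?case using graph_step[OF step(2) g] minor_step[OF step(2) g m] psys_step[OF step(2) g] by blast
qed

theorem theorem21:
  fixes G H :: "'a graph"
  assumes "is_graph G"
    and "reduce_step\<^sup>*\<^sup>* G H"
    and "\<not> (\<exists>H'. reduce_step H H')"
  shows "canonical_minor_3_core G H"
proof -
  have r: "is_graph H \<and> minor H G \<and> (\<exists>P. psys G H P)" using reduce_all[OF assms(2,1)] .
  then have g: "is_graph H" and m: "minor H G" by auto
  from r obtain P where ps: "psys G H P" by blast
  have md: "min_deg_ge3 H" unfolding min_deg_ge3_def
  proof
    fix x assume x: "x \<in> verts H"
    show "3 \<le> degree H x"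
    proof (rule ccontr)
      assume "\<not> 3 \<le> degree H x"
      then have dx: "degree H x \<le> 2" by simp
      show False
      proof (cases "\<exists>e\<in>edges H. x \<in> e")
        case True
        then obtain e where e: "e \<in> edges H" "x \<in> e" by blast
        obtain a b where ab: "a \<noteq> b" "e = {a,b}" using graph_edge[OF g e(1)] by blast
        have "\<exists>w. {x,w} \<in> edges H \<and> x \<noteq> w"
        proof (cases "x = a")
          case True then show ?thesis using ab e by blast
        next
          case False then have "x = b" using ab e by blast
          then show ?thesis using ab e by (metis insert_commute)
        qed
        then obtain w where "{x,w} \<in> edges H" "x \<noteq> w" by blast
        then have "reduce_step H (contract x w H)" using contract_step[OF x dx] by blast
        then show False using assms(3) by blast
      next
        case False
        then have "reduce_step H (verts H - {x}, edges H)" using delete_step[OF x] by blast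
        then show False using assms(3) by blast
      qed
    qed
  qed
  have mx: "\<forall>H'. minor H' G \<and> min_deg_ge3 H' \<longrightarrow> card (edges H') \<le> card (edges H)"
    using maximal[OF assms(2,1)] by blast
  have dpp: "\<forall>v\<in>verts H. disjoint_paths_property G H v" using psys_dpp[OF g ps] by blast
  show ?thesis unfolding canonical_minor_3_core_def minor_3_core_def using m md mx dpp by blast
qed

end
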